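(* Let $x\in[0,1)$, $\alpha\in(0,1)$ and $\lambda>0$, and suppose $\alpha<1-\frac{1}{\lambda(1-x)}$. Then the rumor has a positive steady state, i.e. the equation $\theta_1=(1-x)(1-\alpha)\frac{\lambda\theta_1}{1+\lambda\theta_1}$ has a positive solution $\theta_1>0$. This positive steady state is decreasing in $\alpha$ and in $x$ and increasing in $\lambda$, and it does not depend on the prevalence $\theta_0$ of the truth.
   Context: Model: a continuum population of mass $1$; a mass $x\in[0,1]$ of agents are of type $0$ (biased towards the truth, message $m=0$) and a mass $1-x$ are of type $1$ (biased towards the rumor, message $m=1$). In each type, a fraction $\alpha\in(0,1)$ of agents inspect messages. An agent who does not inspect believes (and transmits) only the message matching her type and ignores the other; an inspecting agent believes and transmits the truth upon receiving either message. Each agent has $k$ meetings per unit of time, each transmitting a message with rate $\nu$, and informed agents die at rate $\delta$ and are replaced by uninformed agents; set $\lambda=k\nu/\delta$. Let $\rho^{\alpha}_{0,0},\rho^{1-\alpha}_{0,0},\rho^{\alpha}_{1,0},\rho^{1-\alpha}_{1,1}\in[0,1]$ be respectively the fractions of inspecting type-0 agents believing the truth, non-inspecting type-0 agents believing the truth, inspecting type-1 agents believing the truth, and non-inspecting type-1 agents believing the rumor. The prevalences are $\theta_0=x[\alpha\rho^{\alpha}_{0,0}+(1-\alpha)\rho^{1-\alpha}_{0,0}]+(1-x)\alpha\rho^{\alpha}_{1,0}$ (truth) and $\theta_1=(1-x)(1-\alpha)\rho^{1-\alpha}_{1,1}$ (rumor). The dynamics are $\dot\rho^{\alpha}_{0,0}=x\alpha[(1-\rho^{\alpha}_{0,0})k\nu(\theta_0+\theta_1)-\rho^{\alpha}_{0,0}\delta]$,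 $\dot\rho^{1-\alpha}_{0,0}=x(1-\alpha)[(1-\rho^{1-\alpha}_{0,0})k\nu\theta_0-\rho^{1-\alpha}_{0,0}\delta]$, $\dot\rho^{\alpha}_{1,0}=(1-x)\alpha[(1-\rho^{\alpha}_{1,0})k\nu(\theta_0+\theta_1)-\rho^{\alpha}_{1,0}\delta]$, $\dot\rho^{1-\alpha}_{1,1}=(1-x)(1-\alpha)[(1-\rho^{1-\alpha}_{1,1})k\nu\theta_1-\rho^{1-\alpha}_{1,1}\delta]$. A steady state is a rest point of these dynamics; at a steady state $\rho^{1-\alpha}_{1,1}=\frac{\lambda\theta_1}{1+\lambda\theta_1}$, so the steady-state rumor prevalence solves $\theta_1=(1-x)(1-\alpha)\frac{\lambda\theta_1}{1+\lambda\theta_1}$. *)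

theory Defs
  imports Complex_Main
begin

text \<open>Prevalence of the truth theta_0 and of the rumor theta_1 as functions of the
  four belief fractions (r0a = rho^alpha_{0,0}, r0n = rho^{1-alpha}_{0,0},
  r1a = rho^alpha_{1,0}, r1n = rho^{1-alpha}_{1,1}).\<close>

definition theta0 :: "real \<Rightarrow> real \<Rightarrow> real \<Rightarrow> real \<Rightarrow> real \<Rightarrow> real \<Rightarrow> real" where
  "theta0 x a r0a r0n r1a r1n = x * (a * r0a + (1 - a) * r0n) + (1 - x) * a * r1a"

definition theta1 :: "real \<Rightarrow> real \<Rightarrow> real \<Rightarrow> real \<Rightarrow> real \<Rightarrow> real \<Rightarrow> real" where
  "theta1 x a r0a r0n r1a r1n = (1 - x) * (1 - a) * r1n"

text \<open>Rest point of the dynamics (all four time derivatives vanish).\<close>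

definition rest_point ::
  "real \<Rightarrow> real \<Rightarrow> real \<Rightarrow> real \<Rightarrow> real \<Rightarrow> real \<Rightarrow> real \<Rightarrow> real \<Rightarrow> real \<Rightarrow> bool" where
  "rest_point x a k nu delta r0a r0n r1a r1n \<longleftrightarrow>
     (let t0 = theta0 x a r0a r0n r1a r1n; t1 = theta1 x a r0a r0n r1a r1n in
       x * a * ((1 - r0a) * k * nu * (t0 + t1) - r0a * delta) = 0 \<and>
       x * (1 - a) * ((1 - r0n) * k * nu * t0 - r0n * delta) = 0 \<and>
       (1 - x) * a * ((1 - r1a) * k * nu * (t0 + t1) - r1a * delta) = 0 \<and>
       (1 - x) * (1 - a) * ((1 - r1n) * k * nu * t1 - r1n * delta) = 0)"

definition rumor_ss_eq :: "real \<Rightarrow> real \<Rightarrow> real \<Rightarrow> real \<Rightarrow> bool" where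
  "rumor_ss_eq x a lam t \<longleftrightarrow> t = (1 - x) * (1 - a) * (lam * t / (1 + lam * t))"

text \<open>The positive steady state of the rumor (meaningful when it exists and is unique).\<close>

definition pos_rumor_ss :: "real \<Rightarrow> real \<Rightarrow> real \<Rightarrow> real" where
  "pos_rumor_ss x a lam = (THE t. t > 0 \<and> rumor_ss_eq x a lam t)"

definition admissible :: "real \<Rightarrow> real \<Rightarrow> real \<Rightarrow> bool" where
  "admissible x a lam \<longleftrightarrow> 0 \<le> x \<and> x < 1 \<and> 0 < a \<and> a < 1 \<and> 0 < lam \<and>
     a < 1 - 1 / (lam * (1 - x))"

end

theory Submission
  imports Defs
begin

lemma ss_iff:
  assumes "admissible x a lam" and "t > 0"
  shows "rumor_ss_eq x a lam t \<longleftrightarrow> t = (1-x)*(1-a) - 1/lam"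
proof -
  from assms(1) have l: "lam > 0" by (simp add: admissible_def)
  have p: "1 + lam*t > 0" using l assms(2) by (simp add: add_pos_pos)
  have "rumor_ss_eq x a lam t \<longleftrightarrow> t*(1+lam*t) = (1-x)*(1-a)*lam*t"
    unfolding rumor_ss_eq_def using p by (simp add: field_simps)
  also have "\<dots> \<longleftrightarrow> 1+lam*t = (1-x)*(1-a)*lam"
    using assms(2) by (smt (verit) mult.commute mult.left_commute mult_cancel_left)
  also have "\<dots> \<longleftrightarrow> t = (1-x)*(1-a) - 1/lam" using l by (auto simp: field_simps)
  finally show ?thesis .
qed

lemma pos_val:
  assumes "admissible x a lam"
  shows "(1-x)*(1-a) - 1/lam > 0"
proof -
  from assms have x: "1 - x > 0" and l: "lam > 0" and h: "a < 1 - 1/(lam*(1-x))"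
    by (auto simp: admissible_def)
  have "1/(lam*(1-x)) < 1 - a" using h by simp
  hence "1/(lam*(1-x)) * (1-x) < (1-a)*(1-x)" by (rule mult_strict_right_mono[OF _ x])
  moreover have "1/(lam*(1-x)) * (1-x) = 1/lam" using x l by simp
  ultimately show ?thesis by (simp add: mult.commute)
qed

lemma ss_val:
  assumes "admissible x a lam"
  shows "pos_rumor_ss x a lam = (1-x)*(1-a) - 1/lam"
  unfolding pos_rumor_ss_def
  using ss_iff[OF assms] pos_val[OF assms]
  by (intro the_equality) auto

theorem lemma1:
  fixes x a lam :: real
  assumes "admissible x a lam"
  shows "(\<exists>!t. t > 0 \<and> rumor_ss_eq x a lam t)
    \<and> (\<forall>a'. admissible x a' lam \<and> a < a' \<longrightarrow> pos_rumor_ss x a' lam < pos_rumor_ss x a lam)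
    \<and> (\<forall>x'. admissible x' a lam \<and> x < x' \<longrightarrow> pos_rumor_ss x' a lam < pos_rumor_ss x a lam)
    \<and> (\<forall>lam'. admissible x a lam' \<and> lam < lam' \<longrightarrow> pos_rumor_ss x a lam < pos_rumor_ss x a lam')
    \<and> (\<forall>k nu delta r0a r0n r1a r1n.
         0 < k \<and> 0 < nu \<and> 0 < delta \<and> lam = k * nu / delta \<and>
         r0a \<in> {0..1} \<and> r0n \<in> {0..1} \<and> r1a \<in> {0..1} \<and> r1n \<in> {0..1} \<and>
         rest_point x a k nu delta r0a r0n r1a r1n \<and>
         theta1 x a r0a r0n r1a r1n > 0
         \<longrightarrow> theta1 x a r0a r0n r1a r1n = pos_rumor_ss x a lam)"
proof (intro conjI allI impI)
  have A: "0 \<le> x" "x < 1" "0 < a" "a < 1" "0 < lam" using assms by (auto simp: admissible_def)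
  show "\<exists>!t. t > 0 \<and> rumor_ss_eq x a lam t"
    using ss_iff[OF assms] pos_val[OF assms] by blast
  fix a' assume h: "admissible x a' lam \<and> a < a'"
  thus "pos_rumor_ss x a' lam < pos_rumor_ss x a lam"
    using ss_val[OF assms] ss_val[of x a' lam] A by (simp add: mult_strict_left_mono)
next
  have A: "0 \<le> x" "x < 1" "0 < a" "a < 1" "0 < lam" using assms by (auto simp: admissible_def)
  fix x' assume h: "admissible x' a lam \<and> x < x'"
  thus "pos_rumor_ss x' a lam < pos_rumor_ss x a lam"
    using ss_val[OF assms] ss_val[of x' a lam] A by (simp add: mult_strict_right_mono)
next
  have A: "0 \<le> x" "x < 1" "0 < a" "a < 1" "0 < lam" using assms by (auto simp: admissible_def)
  fix lam' assume h: "admissible x a lam' \<and> lam < lam'"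
  thus "pos_rumor_ss x a lam < pos_rumor_ss x a lam'"
    using ss_val[OF assms] ss_val[of x a lam'] A by (simp add: frac_less2)
next
  have A: "0 \<le> x" "x < 1" "0 < a" "a < 1" "0 < lam" using assms by (auto simp: admissible_def)
  fix k nu delta r0a r0n r1a r1n :: real
  assume h: "0 < k \<and> 0 < nu \<and> 0 < delta \<and> lam = k * nu / delta \<and>
         r0a \<in> {0..1} \<and> r0n \<in> {0..1} \<and> r1a \<in> {0..1} \<and> r1n \<in> {0..1} \<and>
         rest_point x a k nu delta r0a r0n r1a r1n \<and>
         theta1 x a r0a r0n r1a r1n > 0"
  define c where "c = (1-x)*(1-a)"
  define t where "t = theta1 x a r0a r0n r1a r1n"
  have c: "c > 0" using A by (simp add: c_def)
  have t: "t = c * r1n" by (simp add: t_def c_def theta1_def)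
  have tp: "t > 0" using h by (simp add: t_def)
  have e: "c * ((1 - r1n) * k * nu * t - r1n * delta) = 0"
    using h unfolding rest_point_def Let_def by (simp add: t_def c_def mult.assoc)
  hence e2: "(1 - r1n) * k * nu * t = r1n * delta" using c by simp
  have kn: "k * nu = lam * delta" using h by simp
  have dp: "delta > 0" using h by simp
  have e3: "(1 - r1n) * (lam*delta) * t = r1n*delta" using e2 unfolding kn[symmetric] by (simp add: mult.assoc)
  have "delta * ((1 - r1n) * lam * t) = delta * r1n" using e3
    by (simp add: algebra_simps)
  hence "(1 - r1n) * lam * t = r1n" using dp by simp
  hence q: "c * ((1 - r1n) * lam * t) = c * r1n" by simp
  have ct: "c - t = c * (1 - r1n)" using t by (simp add: algebra_simps)
  have "t * ((c - t) * lam) = c * ((1 - r1n) * lam * t)" unfolding ct by (simp add: algebra_simps)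
  also have "\<dots> = t" using q t by simp
  finally have "t * ((c - t) * lam) = t * 1" by simp
  hence "(c - t) * lam = 1" using tp by simp
  hence "t = c - 1/lam" using A by (simp add: field_simps)
  thus "theta1 x a r0a r0n r1a r1n = pos_rumor_ss x a lam"
    using ss_val[OF assms] by (simp add: t_def c_def)
qed

end
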